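(* Let $\ell$ and $m$ be positive integers with $2\le\ell<m$ and let $G$ be a torsion-free abelian group written multiplicatively. Then there is no sequence $\mathcal{A}=(A_1,\dots,A_m)$ of finite subsets of $G$ satisfying simultaneously: $|A_i|\ge2$ for each $i\in[1,m]$; $|\{a\in A:\mu_{\mathcal{A}}(a)\ge2\}|\le 1$; and \[ |\Pi^{\ell}(\mathcal{A})|=\sum_{a\in A}\mu_{\mathcal{A}}(a)-\ell+1, \] where $A=A_1\cup\cdots\cup A_m$.
   Context: $\chi_S$ is the indicator function of $S$; $\mu_{\mathcal{A}}(a)=\min\big(\ell,\sum_{j=1}^m\chi_{A_j}(a)\big)$ for $a\in A$. $\Pi^{\ell}(\mathcal{A})$ is the set of all products $a_{i_1}\cdots a_{i_\ell}$ with $i_1,\dots,i_\ell\in[1,m]$ pairwise distinct and $a_{i_j}\in A_{i_j}$. *)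

theory Defs
  imports "HOL-Algebra.Algebra"
begin

definition torsion_free :: "('a, 'b) monoid_scheme \<Rightarrow> bool" where
  "torsion_free G \<longleftrightarrow>
     (\<forall>x\<in>carrier G. \<forall>n::nat. n > 0 \<longrightarrow> x [^]\<^bsub>G\<^esub> n = \<one>\<^bsub>G\<^esub> \<longrightarrow> x = \<one>\<^bsub>G\<^esub>)"

definition seq_union :: "(nat \<Rightarrow> 'a set) \<Rightarrow> nat \<Rightarrow> 'a set" where
  "seq_union A m = (\<Union>i\<in>{1..m}. A i)"

definition mult_mu :: "nat \<Rightarrow> (nat \<Rightarrow> 'a set) \<Rightarrow> nat \<Rightarrow> 'a \<Rightarrow> nat" where
  "mult_mu l A m a = min l (\<Sum>j=1..m. if a \<in> A j then 1 else 0)"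

definition restricted_prods ::
  "('a, 'b) monoid_scheme \<Rightarrow> nat \<Rightarrow> (nat \<Rightarrow> 'a set) \<Rightarrow> nat \<Rightarrow> 'a set" where
  "restricted_prods G l A m =
     {finprod G a {..<l} | (i :: nat \<Rightarrow> nat) (a :: nat \<Rightarrow> 'a).
        inj_on i {..<l} \<and> i ` {..<l} \<subseteq> {1..m} \<and> (\<forall>j<l. a j \<in> A (i j))}"

end

theory Submission
  imports Defs
begin


definition cone :: "('a, 'b) monoid_scheme \<Rightarrow> 'a set \<Rightarrow> bool" where
  "cone G P \<longleftrightarrow> P \<subseteq> carrier G \<and> (\<forall>x\<in>P. \<forall>y\<in>P. x \<otimes>\<^bsub>G\<^esub> y \<in> P) \<and> \<one>\<^bsub>G\<^esub> \<notin> P"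

lemma (in comm_group) cone_pow:
  assumes "cone G P" "p \<in> P" "(n::nat) > 0" shows "p [^] n \<in> P"
  using assms(3)
proof (induction n)
  case 0 then show ?case by simp
next
  case (Suc n)
  show ?case
  proof (cases "n = 0")
    case True then show ?thesis using assms cone_def[of G P] by auto
  next
    case False
    then have "p [^] n \<in> P" using Suc by auto
    moreover have "p [^] Suc n = p [^] n \<otimes> p" using assms cone_def[of G P] by (auto simp: nat_pow_Suc)
    ultimately show ?thesis using assms cone_def[of G P] by auto
  qed
qed

lemma (in comm_group) pmd:
  "x \<in> carrier G \<Longrightarrow> y \<in> carrier G \<Longrightarrow> (x \<otimes> y) [^] (n::nat) = x [^] n \<otimes> y [^] n"
  by (rule pow_mult_distrib) (auto simp: m_comm)

definition ext_cone :: "('a, 'b) monoid_scheme \<Rightarrow> 'a set \<Rightarrow> 'a \<Rightarrow> 'a set" where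
  "ext_cone G P x = {p \<otimes>\<^bsub>G\<^esub> x [^]\<^bsub>G\<^esub> (n::nat) | p n. (p \<in> P \<or> p = \<one>\<^bsub>G\<^esub>) \<and> (p \<in> P \<or> n > 0)}"

lemma (in comm_group) ext_cone_closed:
  assumes "cone G P" "x \<in> carrier G"
  shows "ext_cone G P x \<subseteq> carrier G \<and> (\<forall>u\<in>ext_cone G P x. \<forall>v\<in>ext_cone G P x. u \<otimes> v \<in> ext_cone G P x)
         \<and> P \<subseteq> ext_cone G P x \<and> x \<in> ext_cone G P x"
proof (intro conjI)
  have PC: "P \<subseteq> carrier G" and PM: "\<And>a b. a \<in> P \<Longrightarrow> b \<in> P \<Longrightarrow> a \<otimes> b \<in> P"
    using assms cone_def[of G P] by auto
  show "ext_cone G P x \<subseteq> carrier G" using PC assms(2) unfolding ext_cone_def by auto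
  show "P \<subseteq> ext_cone G P x"
  proof
    fix p assume "p \<in> P"
    then have "p = p \<otimes> x [^] (0::nat)" using PC by auto
    then show "p \<in> ext_cone G P x" unfolding ext_cone_def using \<open>p \<in> P\<close> by blast
  qed
  show "x \<in> ext_cone G P x"
  proof -
    have "\<exists>p (n::nat). x = p \<otimes> x [^] n \<and> (p \<in> P \<or> p = \<one>) \<and> (p \<in> P \<or> n > 0)"
      by (intro exI[of _ \<one>] exI[of _ "1::nat"]) (simp add: assms)
    then show ?thesis unfolding ext_cone_def by blast
  qed
  show "\<forall>u\<in>ext_cone G P x. \<forall>v\<in>ext_cone G P x. u \<otimes> v \<in> ext_cone G P x"
  proof (intro ballI)
    fix u v assume "u \<in> ext_cone G P x" "v \<in> ext_cone G P x"
    then obtain p q and n r :: nat where u: "u = p \<otimes> x [^] n" "p \<in> P \<or> p = \<one>" "p \<in> P \<or> n > 0"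
      and v: "v = q \<otimes> x [^] r" "q \<in> P \<or> q = \<one>" "q \<in> P \<or> r > 0"
      unfolding ext_cone_def by blast
    have pc: "p \<in> carrier G" "q \<in> carrier G" using u v PC by auto
    have eq: "u \<otimes> v = (p \<otimes> q) \<otimes> x [^] (n + r)"
      using u v pc assms(2) by (simp add: nat_pow_mult[symmetric] m_ac)
    have "(p \<otimes> q \<in> P \<or> p \<otimes> q = \<one>) \<and> (p \<otimes> q \<in> P \<or> n + r > 0)"
      using u(2,3) v(2,3) pc PM by auto
    then show "u \<otimes> v \<in> ext_cone G P x" unfolding ext_cone_def eq by blast
  qed
qed

lemma (in comm_group) ext_cone_one:
  assumes "cone G P" "x \<in> carrier G" "torsion_free G" "x \<noteq> \<one>"
    and "\<one> \<in> ext_cone G P x"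
  shows "\<exists>p n. p \<in> P \<and> n > 0 \<and> p \<otimes> x [^] (n::nat) = \<one>"
proof -
  have PC: "P \<subseteq> carrier G" using assms cone_def[of G P] by auto
  obtain p n where pn: "\<one> = p \<otimes> x [^] (n::nat)" "p \<in> P \<or> p = \<one>" "p \<in> P \<or> n > 0"
    using assms(5) unfolding ext_cone_def by blast
  show ?thesis
  proof (cases "p \<in> P")
    case True
    then have "n > 0"
    proof -
      { assume "n = 0" then have "p = \<one>" using pn PC True by auto
        then have False using True assms(1) cone_def[of G P] by auto }
      then show ?thesis by auto
    qed
    then show ?thesis using True pn by auto
  next
    case False
    then have "p = \<one>" "n > 0" using pn by auto
    then have "x [^] n = \<one>" using pn assms(2) by (metis l_one nat_pow_closed)
    then have "x = \<one>" using assms(2,3) \<open>n > 0\<close> unfolding torsion_free_def by blast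
    then show ?thesis using assms(4) by simp
  qed
qed

lemma (in comm_group) exists_cone:
  assumes "torsion_free G"
  shows "\<exists>P. cone G P \<and> (\<forall>x\<in>carrier G. x \<noteq> \<one> \<longrightarrow> x \<in> P \<or> inv x \<in> P)"
proof -
  define F where "F = {P. cone G P}"
  have "\<exists>M\<in>F. \<forall>Q\<in>F. M \<subseteq> Q \<longrightarrow> Q = M"
  proof (rule subset_Zorn')
    fix C assume ch: "subset.chain F C"
    then have CF: "C \<subseteq> F" and tot: "\<And>X1 Y. X1 \<in> C \<Longrightarrow> Y \<in> C \<Longrightarrow> X1 \<subseteq> Y \<or> Y \<subseteq> X1"
      unfolding subset.chain_def by auto
    show "\<Union>C \<in> F"
      unfolding F_def cone_def mem_Collect_eq
    proof (intro conjI)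
      show "\<Union>C \<subseteq> carrier G" using CF F_def cone_def[of G] by auto
      show "\<one> \<notin> \<Union>C" using CF F_def cone_def[of G] by auto
      show "\<forall>x\<in>\<Union>C. \<forall>y\<in>\<Union>C. x \<otimes> y \<in> \<Union>C"
      proof (intro ballI)
        fix x y assume "x \<in> \<Union>C" "y \<in> \<Union>C"
        then obtain X1 Y where XY: "X1 \<in> C" "Y \<in> C" "x \<in> X1" "y \<in> Y" by auto
        show "x \<otimes> y \<in> \<Union>C"
        proof (cases "X1 \<subseteq> Y")
          case True
          then have "x \<otimes> y \<in> Y" using XY CF F_def cone_def[of G Y] by auto
          then show ?thesis using XY by auto
        next
          case False
          then have "Y \<subseteq> X1" using tot XY by auto
          then have "x \<otimes> y \<in> X1" using XY CF F_def cone_def[of G X1] by auto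
          then show ?thesis using XY by auto
        qed
      qed
    qed
  qed
  then obtain P where P: "cone G P" and maxP: "\<And>Q. cone G Q \<Longrightarrow> P \<subseteq> Q \<Longrightarrow> Q = P" unfolding F_def by auto
  have PC: "P \<subseteq> carrier G" and PM: "\<And>a b. a \<in> P \<Longrightarrow> b \<in> P \<Longrightarrow> a \<otimes> b \<in> P"
    and P1: "\<one> \<notin> P" using P cone_def[of G P] by auto
  have "x \<in> P \<or> inv x \<in> P" if x: "x \<in> carrier G" "x \<noteq> \<one>" for x
  proof (rule ccontr)
    assume nx: "\<not> (x \<in> P \<or> inv x \<in> P)"
    have ix: "inv x \<in> carrier G" "inv x \<noteq> \<one>" using x by auto
    have c1: "\<one> \<in> ext_cone G P x"
    proof (rule ccontr)
      assume "\<one> \<notin> ext_cone G P x"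
      then have "cone G (ext_cone G P x)" using ext_cone_closed[OF P x(1)] unfolding cone_def by auto
      then have "ext_cone G P x = P" using maxP ext_cone_closed[OF P x(1)] by auto
      then show False using nx ext_cone_closed[OF P x(1)] by auto
    qed
    have c2: "\<one> \<in> ext_cone G P (inv x)"
    proof (rule ccontr)
      assume "\<one> \<notin> ext_cone G P (inv x)"
      then have "cone G (ext_cone G P (inv x))" using ext_cone_closed[OF P ix(1)] unfolding cone_def by auto
      then have "ext_cone G P (inv x) = P" using maxP ext_cone_closed[OF P ix(1)] by auto
      then show False using nx ext_cone_closed[OF P ix(1)] by auto
    qed
    obtain p n where pn: "p \<in> P" "n > 0" "p \<otimes> x [^] (n::nat) = \<one>"
      using ext_cone_one[OF P x(1) assms x(2) c1] by blast
    obtain q r where qr: "q \<in> P" "r > 0" "q \<otimes> inv x [^] (r::nat) = \<one>"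
      using ext_cone_one[OF P ix(1) assms ix(2) c2] by blast
    have pc: "p \<in> carrier G" "q \<in> carrier G" using pn qr PC by auto
    have e1: "p [^] r \<otimes> x [^] (n * r) = \<one>"
    proof -
      have "(p \<otimes> x [^] n) [^] r = \<one>" using pn(3) by simp
      then show ?thesis using pc x by (simp add: pmd nat_pow_pow)
    qed
    have e2: "q [^] n \<otimes> inv x [^] (n * r) = \<one>"
    proof -
      have "(q \<otimes> inv x [^] r) [^] n = \<one>" using qr(3) by simp
      then have "q [^] n \<otimes> inv x [^] (r * n) = \<one>" using pc x by (simp add: pmd nat_pow_pow)
      then show ?thesis by (simp add: mult.commute)
    qed
    have e3: "x [^] (n * r) \<otimes> inv x [^] (n * r) = \<one>"
    proof -
      have "x [^] (n * r) \<otimes> inv x [^] (n * r) = (x \<otimes> inv x) [^] (n * r)"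
        by (rule pmd[symmetric]) (use x in auto)
      also have "\<dots> = \<one>" using x by (simp only: r_inv nat_pow_one)
      finally show ?thesis .
    qed
    have "(p [^] r \<otimes> x [^] (n * r)) \<otimes> (q [^] n \<otimes> inv x [^] (n * r)) = (p [^] r \<otimes> q [^] n) \<otimes> (x [^] (n * r) \<otimes> inv x [^] (n * r))"
      using pc x by (simp add: m_ac)
    then have "p [^] r \<otimes> q [^] n = \<one>" using e1 e2 e3 pc by simp
    moreover have "p [^] r \<otimes> q [^] n \<in> P"
      using PM cone_pow[OF P pn(1) qr(2)] cone_pow[OF P qr(1) pn(2)] by auto
    ultimately show False using P1 by simp
  qed
  then show ?thesis using P by auto
qed



locale ocg = comm_group G for G (structure) +
  fixes P
  assumes cone: "cone G P"
    and tot: "\<And>x. x \<in> carrier G \<Longrightarrow> x \<noteq> \<one> \<Longrightarrow> x \<in> P \<or> inv x \<in> P"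
begin

definition lt where "lt x y \<longleftrightarrow> y \<otimes> inv x \<in> P"

lemma PC: "P \<subseteq> carrier G" and PM: "\<And>a b. a \<in> P \<Longrightarrow> b \<in> P \<Longrightarrow> a \<otimes> b \<in> P"
    and P1: "\<one> \<notin> P" using cone cone_def[of G P] by auto

lemma lt_irrefl: "x \<in> carrier G \<Longrightarrow> \<not> lt x x"
  using P1 by (simp add: lt_def)

lemma lt_trans:
  assumes "x \<in> carrier G" "y \<in> carrier G" "z \<in> carrier G" "lt x y" "lt y z"
  shows "lt x z"
proof -
  have "(z \<otimes> inv y) \<otimes> (y \<otimes> inv x) = z \<otimes> inv x"
  proof -
    have "(z \<otimes> inv y) \<otimes> (y \<otimes> inv x) = z \<otimes> (inv y \<otimes> (y \<otimes> inv x))"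
      by (rule m_assoc) (use assms in auto)
    also have "inv y \<otimes> (y \<otimes> inv x) = (inv y \<otimes> y) \<otimes> inv x"
      by (rule m_assoc[symmetric]) (use assms in auto)
    also have "z \<otimes> ((inv y \<otimes> y) \<otimes> inv x) = z \<otimes> inv x" using assms by (simp only: l_inv l_one inv_closed)
    finally show ?thesis .
  qed
  then show ?thesis using PM[OF assms(5)[unfolded lt_def] assms(4)[unfolded lt_def]] unfolding lt_def by simp
qed

lemma lt_total:
  assumes "x \<in> carrier G" "y \<in> carrier G" "x \<noteq> y"
  shows "lt x y \<or> lt y x"
proof -
  have "y \<otimes> inv x \<noteq> \<one>"
  proof
    assume "y \<otimes> inv x = \<one>"
    then have "(y \<otimes> inv x) \<otimes> x = x" using assms by simp
    moreover have "(y \<otimes> inv x) \<otimes> x = y" using assms by (simp add: m_assoc)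
    ultimately have "y = x" by simp
    then show False using assms by simp
  qed
  then have "y \<otimes> inv x \<in> P \<or> inv (y \<otimes> inv x) \<in> P" using tot assms by auto
  moreover have "inv (y \<otimes> inv x) = x \<otimes> inv y" using assms by (simp add: inv_mult_group)
  ultimately show ?thesis unfolding lt_def by auto
qed

lemma lt_asym: "x \<in> carrier G \<Longrightarrow> y \<in> carrier G \<Longrightarrow> lt x y \<Longrightarrow> \<not> lt y x"
  using lt_trans lt_irrefl by blast

lemma lt_mult_right: 
  assumes "x \<in> carrier G" "y \<in> carrier G" "c \<in> carrier G"
  shows "lt (x \<otimes> c) (y \<otimes> c) \<longleftrightarrow> lt x y"
proof -
  have "(y \<otimes> c) \<otimes> inv (x \<otimes> c) = (y \<otimes> c) \<otimes> (inv c \<otimes> inv x)"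
    using assms by (simp add: inv_mult_group)
  also have "\<dots> = y \<otimes> (c \<otimes> (inv c \<otimes> inv x))" by (rule m_assoc) (use assms in auto)
  also have "c \<otimes> (inv c \<otimes> inv x) = (c \<otimes> inv c) \<otimes> inv x" by (rule m_assoc[symmetric]) (use assms in auto)
  also have "\<dots> = inv x" using assms by simp
  finally have "(y \<otimes> c) \<otimes> inv (x \<otimes> c) = y \<otimes> inv x" .
  then show ?thesis unfolding lt_def by simp
qed

lemma lt_mult_left: 
  assumes "x \<in> carrier G" "y \<in> carrier G" "c \<in> carrier G"
  shows "lt (c \<otimes> x) (c \<otimes> y) \<longleftrightarrow> lt x y"
proof -
  have "c \<otimes> x = x \<otimes> c" "c \<otimes> y = y \<otimes> c" using assms m_comm by blast+
  then show ?thesis using lt_mult_right[OF assms] by simp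
qed

lemma le_lt_mult:
  assumes "x \<in> carrier G" "y \<in> carrier G" "u \<in> carrier G" "v \<in> carrier G"
    and "x = y \<or> lt x y" "lt u v"
  shows "lt (x \<otimes> u) (y \<otimes> v)"
proof -
  have 1: "lt (x \<otimes> u) (x \<otimes> v)" using lt_mult_left assms by auto
  show ?thesis
  proof (cases "x = y")
    case True then show ?thesis using 1 by simp
  next
    case False
    then have "lt (x \<otimes> v) (y \<otimes> v)" using lt_mult_right assms by auto
    then show ?thesis using 1 lt_trans assms by (meson m_closed)
  qed
qed

lemma exists_max:
  assumes "finite S" "S \<noteq> {}" "S \<subseteq> carrier G"
  shows "\<exists>M\<in>S. \<forall>s\<in>S. s \<noteq> M \<longrightarrow> lt s M"
  using assms
proof (induction S rule: finite_ne_induct)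
  case (singleton x) then show ?case by auto
next
  case (insert x F)
  then obtain M where M: "M \<in> F" "\<forall>s\<in>F. s \<noteq> M \<longrightarrow> lt s M" by auto
  show ?case
  proof (cases "lt M x")
    case True
    have "\<forall>s\<in>insert x F. s \<noteq> x \<longrightarrow> lt s x"
    proof (intro ballI impI)
      fix s assume s: "s \<in> insert x F" "s \<noteq> x"
      then have "s \<in> F" by auto
      then have "s = M \<or> lt s M" using M by auto
      then show "lt s x" using True lt_trans[of s M x] insert.prems \<open>s \<in> F\<close> M(1) by auto
    qed
    then show ?thesis by auto
  next
    case False
    then have "x = M \<or> lt x M" using lt_total insert M by blast
    then have "\<forall>s\<in>insert x F. s \<noteq> M \<longrightarrow> lt s M" using M by auto
    then show ?thesis using M by auto
  qed
qed

lemma exists_min: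
  assumes "finite S" "S \<noteq> {}" "S \<subseteq> carrier G"
  shows "\<exists>M\<in>S. \<forall>s\<in>S. s \<noteq> M \<longrightarrow> lt M s"
  using assms
proof (induction S rule: finite_ne_induct)
  case (singleton x) then show ?case by auto
next
  case (insert x F)
  then obtain M where M: "M \<in> F" "\<forall>s\<in>F. s \<noteq> M \<longrightarrow> lt M s" by auto
  show ?case
  proof (cases "lt x M")
    case True
    have "\<forall>s\<in>insert x F. s \<noteq> x \<longrightarrow> lt x s"
    proof (intro ballI impI)
      fix s assume s: "s \<in> insert x F" "s \<noteq> x"
      then have "s \<in> F" by auto
      then have "s = M \<or> lt M s" using M by auto
      then show "lt x s" using True lt_trans[of x M s] insert.prems \<open>s \<in> F\<close> M(1) by auto
    qed
    then show ?thesis by auto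
  next
    case False
    then have "x = M \<or> lt M x" using lt_total insert M by blast
    then have "\<forall>s\<in>insert x F. s \<noteq> M \<longrightarrow> lt M s" using M by auto
    then show ?thesis using M by auto
  qed
qed

end


definition rp :: "('a, 'b) monoid_scheme \<Rightarrow> nat \<Rightarrow> (nat \<Rightarrow> 'a set) \<Rightarrow> nat set \<Rightarrow> 'a set" where
  "rp G l A I = {finprod G a {..<l} | (i :: nat \<Rightarrow> nat) (a :: nat \<Rightarrow> 'a).
        inj_on i {..<l} \<and> i ` {..<l} \<subseteq> I \<and> (\<forall>j<l. a j \<in> A (i j))}"

lemma restricted_prods_rp: "restricted_prods G l A m = rp G l A {1..m}"
  by (simp add: restricted_prods_def rp_def)

definition cnt :: "nat set \<Rightarrow> (nat \<Rightarrow> 'a set) \<Rightarrow> 'a \<Rightarrow> nat" where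
  "cnt I A a = (\<Sum>j\<in>I. if a \<in> A j then 1 else 0)"

context comm_group begin

lemma rp_carrier:
  assumes "\<forall>i\<in>I. A i \<subseteq> carrier G"
  shows "rp G l A I \<subseteq> carrier G"
proof
  fix z assume "z \<in> rp G l A I"
  then obtain i a where z: "z = finprod G a {..<l}" "i ` {..<l} \<subseteq> I" "\<forall>j<l. a j \<in> A (i j)"
    unfolding rp_def by blast
  have "a \<in> {..<l} \<rightarrow> carrier G" using z assms by fastforce
  then show "z \<in> carrier G" using z by simp
qed

lemma rp_finite:
  assumes "finite I" "\<forall>i\<in>I. finite (A i)" "\<forall>i\<in>I. A i \<subseteq> carrier G"
  shows "finite (rp G l A I)"
proof -
  let ?U = "\<Union>i\<in>I. A i"
  have fU: "finite ?U" using assms by auto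
  have "rp G l A I \<subseteq> (\<lambda>xs. finprod G (\<lambda>t. xs ! t) {..<l}) ` {xs. set xs \<subseteq> ?U \<and> length xs = l}"
  proof
    fix z assume "z \<in> rp G l A I"
    then obtain i a where z: "z = finprod G a {..<l}" "i ` {..<l} \<subseteq> I" "\<forall>j<l. a j \<in> A (i j)"
      unfolding rp_def by blast
    let ?xs = "map a [0..<l]"
    have "set ?xs \<subseteq> ?U"
    proof
      fix y assume "y \<in> set ?xs"
      then obtain t where t: "t < l" "y = a t" by auto
      then have "i t \<in> I" "a t \<in> A (i t)" using z by auto
      then show "y \<in> ?U" using t by blast
    qed
    have "finprod G a {..<l} = finprod G (\<lambda>t. ?xs ! t) {..<l}"
    proof (rule finprod_cong')
      show "(\<lambda>t. ?xs ! t) \<in> {..<l} \<rightarrow> carrier G"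
      proof
        fix t assume "t \<in> {..<l}"
        then have "i t \<in> I" "a t \<in> A (i t)" using z by auto
        then show "?xs ! t \<in> carrier G" using assms(3) \<open>t \<in> {..<l}\<close> by auto
      qed
    qed auto

    show "z \<in> (\<lambda>xs. finprod G (\<lambda>t. xs ! t) {..<l}) ` {xs. set xs \<subseteq> ?U \<and> length xs = l}"
    proof (rule image_eqI[where x = ?xs])
      show "z = finprod G (\<lambda>t. ?xs ! t) {..<l}" using z(1) \<open>finprod G a {..<l} = finprod G (\<lambda>t. ?xs ! t) {..<l}\<close> by simp
      show "?xs \<in> {xs. set xs \<subseteq> ?U \<and> length xs = l}" using \<open>set ?xs \<subseteq> ?U\<close> by simp
    qed
  qed
  moreover have "finite {xs. set xs \<subseteq> ?U \<and> length xs = l}" using fU by (rule finite_lists_length_eq)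
  then have "finite ((\<lambda>xs. finprod G (\<lambda>t. xs ! t) {..<l}) ` {xs. set xs \<subseteq> ?U \<and> length xs = l})"
    by (rule finite_imageI)
  ultimately show ?thesis by (rule finite_subset)
qed

lemma rp_step:
  assumes "j \<in> I" "b \<in> A j" "z \<in> rp G l A (I - {j})" "\<forall>i\<in>I. A i \<subseteq> carrier G"
  shows "b \<otimes> z \<in> rp G (Suc l) A I"
proof -
  obtain i a where z: "z = finprod G a {..<l}" "inj_on i {..<l}" "i ` {..<l} \<subseteq> I - {j}" "\<forall>t<l. a t \<in> A (i t)"
    using assms(3) unfolding rp_def by blast
  define i' where "i' = i(l := j)"
  define a' where "a' = a(l := b)"
  have ac: "a \<in> {..<l} \<rightarrow> carrier G" using z assms(4) by fastforce
  have bc: "b \<in> carrier G" using assms by auto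
  have al: "a' l = b" by (simp add: a'_def)
  have "finprod G a' {..<Suc l} = a' l \<otimes> finprod G a' {..<l}"
    unfolding lessThan_Suc using ac bc by (intro finprod_insert) (auto simp: a'_def)
  moreover have "finprod G a' {..<l} = finprod G a {..<l}"
    using ac by (intro finprod_cong') (auto simp: a'_def)
  ultimately have eq: "finprod G a' {..<Suc l} = b \<otimes> z" using z(1) al by simp
  have "inj_on i' {..<Suc l}"
    unfolding lessThan_Suc i'_def using z(2,3) by (auto simp: inj_on_def)
  moreover have "i' ` {..<Suc l} \<subseteq> I"
  proof
    fix y assume "y \<in> i' ` {..<Suc l}"
    then obtain t where t: "t < Suc l" "y = i' t" by auto
    show "y \<in> I"
    proof (cases "t = l")
      case True then show ?thesis using t assms(1) by (simp add: i'_def)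
    next
      case False then have "t < l" using t by simp
      then have "i t \<in> I - {j}" using z(3) by blast
      then show ?thesis using t False by (simp add: i'_def)
    qed
  qed
  moreover have "\<forall>t<Suc l. a' t \<in> A (i' t)" using z(4) assms(2) by (auto simp: i'_def a'_def less_Suc_eq)
  ultimately show ?thesis unfolding rp_def using eq[symmetric] by blast
qed

lemma rp_one:
  assumes "i \<in> I" "c \<in> A i" "c \<in> carrier G"
  shows "c \<in> rp G 1 A I"
proof -
  have e: "{..<1::nat} = insert 0 {}" by auto
  have "finprod G (\<lambda>_. c) {..<1::nat} = c \<otimes> finprod G (\<lambda>_. c) {}"
    unfolding e using finprod_insert[of "{}" "0::nat" "\<lambda>_. c"] assms by simp
  then have "finprod G (\<lambda>_. c) {..<1::nat} = c" using assms by simp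
  moreover have "inj_on (\<lambda>_. i) {..<(1::nat)}" by (simp add: inj_on_def)
  ultimately show ?thesis unfolding rp_def using assms
    by (intro CollectI exI[of _ "\<lambda>_. i"] exI[of _ "\<lambda>_. c"]) auto
qed

lemma rp_nonempty:
  assumes "finite I" "l \<le> card I" "\<forall>i\<in>I. A i \<noteq> {}"
  shows "rp G l A I \<noteq> {}"
proof -
  obtain T where T: "T \<subseteq> I" "card T = l" "finite T" using obtain_subset_with_card_n[OF assms(2)] by blast
  obtain h where h: "bij_betw h {0..<card T} T" using ex_bij_betw_nat_finite[OF T(3)] by blast
  define a where "a = (\<lambda>t. SOME y. y \<in> A (h t))"
  have "inj_on h {..<l}" using h T by (simp add: bij_betw_def lessThan_atLeast0)
  moreover have "h ` {..<l} \<subseteq> I" using h T by (auto simp: bij_betw_def lessThan_atLeast0)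
  moreover have "\<forall>t<l. a t \<in> A (h t)"
  proof (intro allI impI)
    fix t assume "t < l"
    then have "h t \<in> I" using h T by (auto simp: bij_betw_def)
    then show "a t \<in> A (h t)" unfolding a_def using assms(3) by (simp add: some_in_eq)
  qed
  ultimately have "finprod G a {..<l} \<in> rp G l A I" unfolding rp_def by blast
  then show ?thesis by auto
qed

end


context ocg begin

lemma lcancel: "x \<in> carrier G \<Longrightarrow> y \<in> carrier G \<Longrightarrow> z \<in> carrier G \<Longrightarrow> (x \<otimes> y = x \<otimes> z) = (y = z)"
  by (metis m_comm right_cancel)

lemma sumset_card:
  assumes "finite B" "finite Y" "B \<noteq> {}" "Y \<noteq> {}" "B \<subseteq> carrier G" "Y \<subseteq> carrier G"
  shows "card B + card Y \<le> card ((\<lambda>(b, y). b \<otimes> y) ` (B \<times> Y)) + 1"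
proof -
  obtain b0 where b0: "b0 \<in> B" "\<forall>b\<in>B. b \<noteq> b0 \<longrightarrow> lt b0 b" using exists_min[OF assms(1,3,5)] by blast
  obtain yM where yM: "yM \<in> Y" "\<forall>y\<in>Y. y \<noteq> yM \<longrightarrow> lt y yM" using exists_max[OF assms(2,4,6)] by blast
  have b0c: "b0 \<in> carrier G" and yMc: "yM \<in> carrier G" using b0 yM assms by auto
  define C1 where "C1 = (\<lambda>y. b0 \<otimes> y) ` Y"
  define C2 where "C2 = (\<lambda>b. b \<otimes> yM) ` (B - {b0})"
  have "inj_on (\<lambda>y. b0 \<otimes> y) Y"
    unfolding inj_on_def using assms(6) b0c lcancel by blast
  then have c1: "card C1 = card Y" unfolding C1_def by (rule card_image)
  have "inj_on (\<lambda>b. b \<otimes> yM) (B - {b0})"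
    unfolding inj_on_def using assms(5) yMc right_cancel by blast
  then have "card C2 = card (B - {b0})" unfolding C2_def by (rule card_image)
  then have c2: "card C2 = card B - 1" using b0 assms(1) by simp
  have disj: "C1 \<inter> C2 = {}"
  proof (rule ccontr)
    assume "C1 \<inter> C2 \<noteq> {}"
    then obtain y b where yb: "y \<in> Y" "b \<in> B" "b \<noteq> b0" "b0 \<otimes> y = b \<otimes> yM"
      unfolding C1_def C2_def by auto
    have "lt (b0 \<otimes> y) (b \<otimes> yM)"
    proof -
      have "lt (y \<otimes> b0) (yM \<otimes> b)"
        using le_lt_mult[of y yM b0 b] yb yM b0 assms(5,6) yMc b0c by auto
      then show ?thesis using m_comm yb assms(5,6) b0c yMc by (metis subsetD)
    qed
    then show False using yb lt_irrefl assms(5) yMc by (metis m_closed subsetD)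
  qed
  have "C1 \<union> C2 \<subseteq> (\<lambda>(b, y). b \<otimes> y) ` (B \<times> Y)"
    unfolding C1_def C2_def using b0 yM by auto
  moreover have "finite ((\<lambda>(b, y). b \<otimes> y) ` (B \<times> Y))" using assms by auto
  ultimately have "card (C1 \<union> C2) \<le> card ((\<lambda>(b, y). b \<otimes> y) ` (B \<times> Y))" by (rule card_mono[rotated])
  moreover have "card (C1 \<union> C2) = card C1 + card C2"
    using disj assms unfolding C1_def C2_def by (intro card_Un_disjoint) auto
  moreover have "card B \<ge> 1" using assms(1,3) by (simp add: Suc_le_eq card_gt_0_iff)
  ultimately show ?thesis using c1 c2 by linarith
qed

lemma rp2:
  assumes "i \<in> I" "i' \<in> I" "i \<noteq> i'" "b \<in> A i" "c \<in> A i'" "\<forall>k\<in>I. A k \<subseteq> carrier G"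
  shows "b \<otimes> c \<in> rp G 2 A I"
proof -
  have "c \<in> rp G 1 A (I - {i})" using assms by (intro rp_one) auto
  then have "b \<otimes> c \<in> rp G (Suc 1) A I" using assms by (intro rp_step) auto
  then show ?thesis by (simp add: numeral_2_eq_2)
qed

lemma sum_ind_card:
  assumes "finite U" "R \<subseteq> U"
  shows "(\<Sum>a\<in>U. if a \<in> R then 1 else 0) = (card R :: nat)"
proof -
  have "(\<Sum>a\<in>{a \<in> U. a \<in> R}. 1) = (\<Sum>a\<in>U. if a \<in> R then 1 else (0::nat))"
    using assms(1) by (rule sum.inter_filter)
  moreover have "{a \<in> U. a \<in> R} = R" using assms by auto
  ultimately show ?thesis by simp
qed

lemma base2:
  assumes fI: "finite I" and cI: "2 < card I"
    and A: "\<forall>i\<in>I. finite (A i) \<and> A i \<subseteq> carrier G \<and> 2 \<le> card (A i)"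
    and R: "card {a \<in> (\<Union>i\<in>I. A i). 2 \<le> min 2 (cnt I A a)} \<le> 1"
  shows "(\<Sum>a\<in>(\<Union>i\<in>I. A i). min 2 (cnt I A a)) + 2 \<le> card (rp G 2 A I) + 2"
proof -
  define U where "U = (\<Union>i\<in>I. A i)"
  have Ane: "\<And>i. i \<in> I \<Longrightarrow> A i \<noteq> {}" using A by fastforce
  have AC: "\<forall>i\<in>I. A i \<subseteq> carrier G" using A by auto
  have fU: "finite U" unfolding U_def using fI A by auto
  have UC: "U \<subseteq> carrier G" unfolding U_def using A by auto
  have "I \<noteq> {}" using cI by auto
  then have Une: "U \<noteq> {}" unfolding U_def using Ane by auto
  obtain w where w: "w \<in> U" "\<forall>u\<in>U. u \<noteq> w \<longrightarrow> lt w u" using exists_min[OF fU Une UC] by blast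
  obtain j where j: "j \<in> I" "w \<in> A j" using w(1) unfolding U_def by auto
  define I' where "I' = I - {j}"
  have cI': "card I' = card I - 1" unfolding I'_def using j fI by simp
  have fI': "finite I'" using fI unfolding I'_def by simp
  define XX where "XX = (\<Union>i\<in>I'. A i)"
  have fX: "finite XX" unfolding XX_def using fI' A I'_def by auto
  have XC: "XX \<subseteq> carrier G" unfolding XX_def I'_def using A by auto
  have "I' \<noteq> {}" using cI' cI by auto
  then have Xne: "XX \<noteq> {}" unfolding XX_def using Ane I'_def by auto
  obtain yM where yM: "yM \<in> XX" "\<forall>x\<in>XX. x \<noteq> yM \<longrightarrow> lt x yM" using exists_max[OF fX Xne XC] by blast
  obtain p where p: "p \<in> I'" "yM \<in> A p" using yM(1) unfolding XX_def by auto
  have "card (I' - {p}) = card I' - 1" using p fI' by simp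
  then have "card (I' - {p}) > 0" using cI' cI by linarith
  then have "I' - {p} \<noteq> {}" by (metis card.empty less_irrefl)
  then obtain q where q: "q \<in> I'" "q \<noteq> p" by auto
  have jI': "j \<notin> I'" "p \<in> I" "q \<in> I" "p \<noteq> j" "q \<noteq> j" using p q unfolding I'_def by auto
  have wc: "w \<in> carrier G" and yMc: "yM \<in> carrier G" using w UC yM XC by auto
  have UjX: "U = A j \<union> XX" unfolding U_def XX_def I'_def using j by auto
  have AqX: "A q \<subseteq> XX" unfolding XX_def using q by auto
  have fAj: "finite (A j)" and fAq: "finite (A q)" using A j jI' by auto
  have cAj: "2 \<le> card (A j)" and cAq: "2 \<le> card (A q)" using A j jI' by auto
  have AjC: "A j \<subseteq> carrier G" and AqC: "A q \<subseteq> carrier G" using A j jI' by auto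
  define C1 where "C1 = (\<lambda>y. w \<otimes> y) ` XX"
  define C2 where "C2 = (\<lambda>b. b \<otimes> yM) ` (A j - {w})"
  define E where "E = (\<lambda>c. yM \<otimes> c) ` (A q - A j)"
  have "inj_on (\<lambda>y. w \<otimes> y) XX"
    unfolding inj_on_def using XC wc lcancel by blast
  then have c1: "card C1 = card XX" unfolding C1_def by (rule card_image)
  have "inj_on (\<lambda>b. b \<otimes> yM) (A j - {w})"
    unfolding inj_on_def using AjC yMc right_cancel by blast
  then have "card C2 = card (A j - {w})" unfolding C2_def by (rule card_image)
  then have c2: "card C2 = card (A j) - 1" using j fAj by simp
  have "inj_on (\<lambda>c. yM \<otimes> c) (A q - A j)"
    unfolding inj_on_def using AqC yMc lcancel by blast
  then have c3: "card E = card (A q - A j)" unfolding E_def by (rule card_image)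
  have wlt: "\<And>u. u \<in> U \<Longrightarrow> u \<noteq> w \<Longrightarrow> lt w u" using w by auto
  have yle: "\<And>x. x \<in> XX \<Longrightarrow> x = yM \<or> lt x yM" using yM by auto
  have key: "lt (w \<otimes> y) (yM \<otimes> b)" if "y \<in> XX" "b \<in> U" "b \<noteq> w" for y b
  proof -
    have bc: "b \<in> carrier G" "y \<in> carrier G" using that UC XC by auto
    have "lt (y \<otimes> w) (yM \<otimes> b)"
      using le_lt_mult[of y yM w b] that yle wlt bc wc yMc by auto
    then show ?thesis using m_comm bc wc by metis
  qed
  have d1: "C1 \<inter> C2 = {}"
  proof (rule ccontr)
    assume "C1 \<inter> C2 \<noteq> {}"
    then obtain y b where yb: "y \<in> XX" "b \<in> A j" "b \<noteq> w" "w \<otimes> y = b \<otimes> yM"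
      unfolding C1_def C2_def by auto
    have "b \<in> U" using yb UjX by auto
    then have "lt (w \<otimes> y) (yM \<otimes> b)" using key[OF yb(1) _ yb(3)] by blast
    moreover have "yM \<otimes> b = b \<otimes> yM" using m_comm yMc AjC yb by auto
    ultimately show False using yb lt_irrefl yMc AjC by (metis m_closed subsetD)
  qed
  have d2: "(C1 \<union> C2) \<inter> E = {}"
  proof (rule ccontr)
    assume "(C1 \<union> C2) \<inter> E \<noteq> {}"
    then obtain c where c: "c \<in> A q" "c \<notin> A j" "yM \<otimes> c \<in> C1 \<union> C2"
      unfolding E_def by auto
    have cU: "c \<in> U" "c \<noteq> w" using c AqX UjX j by auto
    have cc: "c \<in> carrier G" using c AqC by auto
    show False
    proof (cases "yM \<otimes> c \<in> C1")
      case True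
      then obtain y where y: "y \<in> XX" "yM \<otimes> c = w \<otimes> y" unfolding C1_def by auto
      then have "lt (w \<otimes> y) (yM \<otimes> c)" using key[OF y(1) cU] by blast
      then show False using y lt_irrefl yMc cc by (metis m_closed)
    next
      case False
      then have "yM \<otimes> c \<in> C2" using c by auto
      then obtain b where b: "b \<in> A j" "yM \<otimes> c = b \<otimes> yM" unfolding C2_def by auto
      then have "c \<otimes> yM = b \<otimes> yM" using m_comm yMc cc by auto
      then have "c = b" using right_cancel yMc cc b AjC by blast
      then show False using b c by auto
    qed
  qed
  have sub: "C1 \<union> C2 \<union> E \<subseteq> rp G 2 A I"
  proof -
    have "C1 \<subseteq> rp G 2 A I"
    proof
      fix z assume "z \<in> C1"
      then obtain y where y: "y \<in> XX" "z = w \<otimes> y" unfolding C1_def by auto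
      then obtain i where "i \<in> I'" "y \<in> A i" unfolding XX_def by auto
      then show "z \<in> rp G 2 A I" using y rp2[of j I i w A y] j AC unfolding I'_def by auto
    qed
    moreover have "C2 \<subseteq> rp G 2 A I"
      unfolding C2_def using rp2[of j I p _ A yM] j jI' p AC by auto
    moreover have "E \<subseteq> rp G 2 A I"
      unfolding E_def using rp2[of p I q yM A] jI' p q AC by auto
    ultimately show ?thesis by auto
  qed
  have fin: "finite (rp G 2 A I)" using rp_finite fI A by auto
  have "card (C1 \<union> C2 \<union> E) = card C1 + card C2 + card E"
  proof -
    have "card (C1 \<union> C2 \<union> E) = card (C1 \<union> C2) + card E"
      using d2 fin sub by (intro card_Un_disjoint) (auto intro: finite_subset)
    moreover have "card (C1 \<union> C2) = card C1 + card C2"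
      using d1 fin sub by (intro card_Un_disjoint) (auto intro: finite_subset)
    ultimately show ?thesis by simp
  qed
  moreover have "card (C1 \<union> C2 \<union> E) \<le> card (rp G 2 A I)" using sub fin by (rule card_mono[rotated])
  ultimately have cnt1: "card XX + (card (A j) - 1) + card (A q - A j) \<le> card (rp G 2 A I)"
    using c1 c2 c3 by linarith
  have e1: "card (A j) + card XX = card U + card (A j \<inter> XX)"
    unfolding UjX using fAj fX by (rule card_Un_Int)
  have e2: "card (A q - A j) = card (A q) - card (A q \<inter> A j)"
    using fAq by (intro card_Diff_subset_Int) auto
  have e3: "card (A q \<inter> A j) \<le> card (A j \<inter> XX)"
    using AqX fAj by (intro card_mono) auto
  have e4: "card (A q \<inter> A j) \<le> card (A q)" using fAq by (intro card_mono) auto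
  have bigC: "card U + 1 \<le> card (rp G 2 A I)" using cnt1 e1 e2 e3 e4 cAj cAq by linarith
  define Rs where "Rs = {a \<in> U. 2 \<le> min 2 (cnt I A a)}"
  have Rs1: "card Rs \<le> 1" using R unfolding Rs_def U_def by simp
  have "(\<Sum>a\<in>U. min 2 (cnt I A a)) \<le> (\<Sum>a\<in>U. 1 + (if a \<in> Rs then 1 else 0))"
  proof (rule sum_mono)
    fix a assume "a \<in> U"
    show "min 2 (cnt I A a) \<le> 1 + (if a \<in> Rs then 1 else 0)"
      using \<open>a \<in> U\<close> unfolding Rs_def by auto
  qed
  also have "\<dots> = (\<Sum>a\<in>U. 1) + (\<Sum>a\<in>U. if a \<in> Rs then 1 else 0)"
    by (rule sum.distrib)
  also have "\<dots> = card U + card Rs"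
    using sum_ind_card[OF fU, of Rs] by (simp add: Rs_def)
  finally have "(\<Sum>a\<in>U. min 2 (cnt I A a)) \<le> card U + card Rs" .
  then show ?thesis using Rs1 bigC unfolding U_def by linarith
qed

lemma cnt_remove:
  assumes "finite I" "j \<in> I"
  shows "cnt I A a = cnt (I - {j}) A a + (if a \<in> A j then 1 else 0)"
  unfolding cnt_def using sum.remove[OF assms, of "\<lambda>i. if a \<in> A i then 1 else (0::nat)"] by simp

lemma stepl:
  assumes l2: "2 \<le> l"
    and IH: "\<And>I. finite I \<Longrightarrow> l < card I \<Longrightarrow> (\<forall>i\<in>I. finite (A i) \<and> A i \<subseteq> carrier G \<and> 2 \<le> card (A i))
       \<Longrightarrow> card {a \<in> (\<Union>i\<in>I. A i). 2 \<le> min l (cnt I A a)} \<le> 1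
       \<Longrightarrow> (\<Sum>a\<in>(\<Union>i\<in>I. A i). min l (cnt I A a)) + 2 \<le> card (rp G l A I) + l"
    and fI: "finite I" and cI: "Suc l < card I"
    and A: "\<forall>i\<in>I. finite (A i) \<and> A i \<subseteq> carrier G \<and> 2 \<le> card (A i)"
    and R: "card {a \<in> (\<Union>i\<in>I. A i). 2 \<le> min (Suc l) (cnt I A a)} \<le> 1"
  shows "(\<Sum>a\<in>(\<Union>i\<in>I. A i). min (Suc l) (cnt I A a)) + 2 \<le> card (rp G (Suc l) A I) + Suc l"
proof -
  define U where "U = (\<Union>i\<in>I. A i)"
  define Rs where "Rs = {a \<in> U. 2 \<le> min (Suc l) (cnt I A a)}"
  have Ane: "\<And>i. i \<in> I \<Longrightarrow> A i \<noteq> {}" using A by fastforce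
  have AC: "\<forall>i\<in>I. A i \<subseteq> carrier G" using A by auto
  have fU: "finite U" unfolding U_def using fI A by auto
  have fRs: "finite Rs" unfolding Rs_def using fU by auto
  have Rs1: "card Rs \<le> 1" using R unfolding Rs_def U_def by simp
  have "I \<noteq> {}" using cI by auto
  obtain j where j: "j \<in> I" and jprop: "\<And>a. a \<in> U \<Longrightarrow> a \<notin> A j \<Longrightarrow> cnt I A a \<le> l"
  proof (cases "Rs = {}")
    case True
    obtain j where "j \<in> I" using \<open>I \<noteq> {}\<close> by auto
    moreover have "cnt I A a \<le> l" if "a \<in> U" for a
    proof (rule ccontr)
      assume "\<not> cnt I A a \<le> l"
      then have "a \<in> Rs" unfolding Rs_def using that l2 by auto
      then show False using True by auto
    qed
    ultimately show ?thesis using that by blast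
  next
    case False
    then obtain r where r: "r \<in> Rs" by auto
    then obtain j where j: "j \<in> I" "r \<in> A j" unfolding Rs_def U_def by auto
    moreover have "cnt I A a \<le> l" if "a \<in> U" "a \<notin> A j" for a
    proof (rule ccontr)
      assume "\<not> cnt I A a \<le> l"
      then have "a \<in> Rs" unfolding Rs_def using that l2 by auto
      then have "a = r" using r Rs1 fRs by (metis One_nat_def card_le_Suc0_iff_eq)
      then show False using that j by auto
    qed
    ultimately show ?thesis using that by blast
  qed
  define I' where "I' = I - {j}"
  define U' where "U' = (\<Union>i\<in>I'. A i)"
  have fI': "finite I'" using fI unfolding I'_def by simp
  have cI': "card I' = card I - 1" unfolding I'_def using j fI by simp
  have A': "\<forall>i\<in>I'. finite (A i) \<and> A i \<subseteq> carrier G \<and> 2 \<le> card (A i)" using A unfolding I'_def by auto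
  have UU': "U' \<subseteq> U" unfolding U_def U'_def I'_def by auto
  have cntr: "\<And>a. cnt I A a = cnt I' A a + (if a \<in> A j then 1 else 0)"
    unfolding I'_def by (rule cnt_remove[OF fI j])
  have "{a \<in> U'. 2 \<le> min l (cnt I' A a)} \<subseteq> Rs"
  proof
    fix a assume "a \<in> {a \<in> U'. 2 \<le> min l (cnt I' A a)}"
    then have "a \<in> U" "2 \<le> cnt I' A a" using UU' by auto
    then show "a \<in> Rs" unfolding Rs_def using cntr[of a] l2 by auto
  qed
  then have "card {a \<in> U'. 2 \<le> min l (cnt I' A a)} \<le> 1" using Rs1 fRs card_mono by (metis le_trans)
  then have IH': "(\<Sum>a\<in>U'. min l (cnt I' A a)) + 2 \<le> card (rp G l A I') + l"
    using IH[OF fI' _ A'] cI' cI unfolding U'_def by auto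
  define Y where "Y = rp G l A I'"
  have fY: "finite Y" unfolding Y_def using rp_finite fI' A' by auto
  have YC: "Y \<subseteq> carrier G" unfolding Y_def using rp_carrier A' by auto
  have Yne: "Y \<noteq> {}" unfolding Y_def using rp_nonempty[OF fI'] cI' cI Ane unfolding I'_def by auto
  have fAj: "finite (A j)" and AjC: "A j \<subseteq> carrier G" using A j by auto
  define S where "S = (\<lambda>(b, y). b \<otimes> y) ` (A j \<times> Y)"
  have cS: "card (A j) + card Y \<le> card S + 1"
    unfolding S_def using sumset_card[OF fAj fY Ane[OF j] Yne AjC YC] .
  have Ssub: "S \<subseteq> rp G (Suc l) A I"
    unfolding S_def Y_def I'_def using rp_step[OF j _ _ AC] by auto
  have fin: "finite (rp G (Suc l) A I)" using rp_finite fI A by auto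
  have cS2: "card S \<le> card (rp G (Suc l) A I)" using Ssub fin by (rule card_mono[rotated])
  have s1: "(\<Sum>a\<in>U'. min l (cnt I' A a)) = (\<Sum>a\<in>U. min l (cnt I' A a))"
  proof (rule sum.mono_neutral_left[OF fU UU'])
    show "\<forall>a\<in>U - U'. min l (cnt I' A a) = 0"
    proof
      fix a assume "a \<in> U - U'"
      then have "\<forall>i\<in>I'. a \<notin> A i" unfolding U'_def by auto
      then show "min l (cnt I' A a) = 0" unfolding cnt_def by simp
    qed
  qed
  have s2: "(\<Sum>a\<in>U. if a \<in> A j then 1 else 0) = card (A j)"
    using sum_ind_card[OF fU, of "A j"] j unfolding U_def by auto
  have "(\<Sum>a\<in>U. min (Suc l) (cnt I A a)) \<le> (\<Sum>a\<in>U. (if a \<in> A j then 1 else 0) + min l (cnt I' A a))"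
  proof (rule sum_mono)
    fix a assume aU: "a \<in> U"
    show "min (Suc l) (cnt I A a) \<le> (if a \<in> A j then 1 else 0) + min l (cnt I' A a)"
    proof (cases "a \<in> A j")
      case True then show ?thesis using cntr[of a] by simp
    next
      case False then show ?thesis using cntr[of a] jprop[OF aU] by simp
    qed
  qed
  also have "\<dots> = card (A j) + (\<Sum>a\<in>U'. min l (cnt I' A a))"
    by (simp add: sum.distrib s1 s2)
  finally have "(\<Sum>a\<in>U. min (Suc l) (cnt I A a)) \<le> card (A j) + (\<Sum>a\<in>U'. min l (cnt I' A a))" .
  then show ?thesis using IH' cS cS2 unfolding U_def Y_def by linarith
qed

theorem main_ocg:
  assumes "2 \<le> l" "finite I" "l < card I"
    "\<forall>i\<in>I. finite (A i) \<and> A i \<subseteq> carrier G \<and> 2 \<le> card (A i)"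
    "card {a \<in> (\<Union>i\<in>I. A i). 2 \<le> min l (cnt I A a)} \<le> 1"
  shows "(\<Sum>a\<in>(\<Union>i\<in>I. A i). min l (cnt I A a)) + 2 \<le> card (rp G l A I) + l"
  using assms(1) assms(2-)
proof (induction l arbitrary: I rule: nat_induct_at_least)
  case base
  then show ?case using base2 by auto
next
  case (Suc l)
  show ?case by (rule stepl[OF Suc.hyps(1) Suc.IH Suc.prems])
qed

end

theorem theorem1p17:
  fixes G :: "('a, 'b) monoid_scheme" and l m :: nat
  assumes "comm_group G" and "torsion_free G"
    and "2 \<le> l" and "l < m"
  shows "\<not> (\<exists>A :: nat \<Rightarrow> 'a set.
           (\<forall>i\<in>{1..m}. finite (A i) \<and> A i \<subseteq> carrier G \<and> card (A i) \<ge> 2)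
         \<and> card {a \<in> seq_union A m. mult_mu l A m a \<ge> 2} \<le> 1
         \<and> int (card (restricted_prods G l A m))
             = int (\<Sum>a\<in>seq_union A m. mult_mu l A m a) - int l + 1)"
proof
  assume "\<exists>A :: nat \<Rightarrow> 'a set.
           (\<forall>i\<in>{1..m}. finite (A i) \<and> A i \<subseteq> carrier G \<and> card (A i) \<ge> 2)
         \<and> card {a \<in> seq_union A m. mult_mu l A m a \<ge> 2} \<le> 1
         \<and> int (card (restricted_prods G l A m))
             = int (\<Sum>a\<in>seq_union A m. mult_mu l A m a) - int l + 1"
  then obtain A :: "nat \<Rightarrow> 'a set" where
    A1: "\<forall>i\<in>{1..m}. finite (A i) \<and> A i \<subseteq> carrier G \<and> card (A i) \<ge> 2"
    and A2: "card {a \<in> seq_union A m. mult_mu l A m a \<ge> 2} \<le> 1"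
    and A3: "int (card (restricted_prods G l A m))
             = int (\<Sum>a\<in>seq_union A m. mult_mu l A m a) - int l + 1"
    by blast
  interpret cg: comm_group G by (rule assms(1))
  obtain P where P: "cone G P" "\<forall>x\<in>carrier G. x \<noteq> \<one>\<^bsub>G\<^esub> \<longrightarrow> x \<in> P \<or> inv\<^bsub>G\<^esub> x \<in> P"
    using cg.exists_cone[OF assms(2)] by blast
  interpret o: ocg G P
    using P by (unfold_locales) auto
  have su: "seq_union A m = (\<Union>i\<in>{1..m}. A i)" by (simp add: seq_union_def)
  have mu: "\<And>a. mult_mu l A m a = min l (cnt {1..m} A a)" by (simp add: mult_mu_def cnt_def)
  have "(\<Sum>a\<in>(\<Union>i\<in>{1..m}. A i). min l (cnt {1..m} A a)) + 2 \<le> card (rp G l A {1..m}) + l"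
    using o.main_ocg[of l "{1..m}" A] assms(3,4) A1 A2 unfolding su mu by auto
  then have "(\<Sum>a\<in>seq_union A m. mult_mu l A m a) + 2 \<le> card (restricted_prods G l A m) + l"
    unfolding su mu restricted_prods_rp .
  then show False using A3 by linarith
qed

end
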